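(* Let $1\le t\le\min(r,s)$ and $\tau_t=e_{r,r+1}e_{r-1,r+2}\cdots e_{r-t+1,r+t}\in B_{r,s}(\delta)$. Then (1) $(L_{r-a+1}+L_{r+a})\tau_t=0$ for every $1\le a\le t$; (2) $\big(-\sum_{i=r-t+1}^{r}e_{i,j}+\sum_{i=r+1}^{r+t}(i,j)\big)\tau_t=0$ for every $j$ with $r+t+1\le j\le r+s$.
   Context: $B_{r,s}(\delta)$ ($r,s\ge0$, $\delta\in\mathbb C$) is the walled Brauer algebra with basis the $(r,s)$-walled Brauer diagrams (two rows of $r+s$ vertices numbered $1,\dots,r+s$, wall after the first $r$ in each row, each vertex joined to exactly one other, vertical strands do not cross the wall, horizontal strands within a row cross it), product by stacking $d_1$ under $d_2$ (top of $d_1$ identified with bottom of $d_2$) and multiplying by $\delta^n$ for $n$ removed closed loops. $(a,b)$ ($a<b$ on the same side of the wall) is the transposition diagram; $e_{j,k}$ ($j\le r<k$) has horizontal strands joining $j,k$ in both rows, others straight. $L_k=\sum_{j=1}^{k-1}(j,k)$ for $k\le r$, $L_k=-\sum_{j=1}^r e_{j,k}+\sum_{j=r+1}^{k-1}(j,k)+\delta$ for $r<k\le r+s$. *)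

theory Defs
  imports Complex_Main "HOL-Library.Function_Algebras"
begin

text \<open>Vertices of a diagram: (True, i) is vertex i of the top row,
  (False, i) is vertex i of the bottom row, i in {1..n}.
  A diagram is a symmetric edge relation (perfect matching) on these vertices.\<close>

type_synonym vtx = "bool \<times> nat"
type_synonym diagram = "(vtx \<times> vtx) set"

definition verts :: "nat \<Rightarrow> vtx set" where
  "verts n = UNIV \<times> {1..n}"

definition walled_diagram :: "nat \<Rightarrow> nat \<Rightarrow> diagram \<Rightarrow> bool" where
  "walled_diagram r s E \<longleftrightarrow>
     E \<subseteq> verts (r+s) \<times> verts (r+s) \<and> sym E \<and> (\<forall>v. (v,v) \<notin> E) \<and>
     (\<forall>v\<in>verts (r+s). \<exists>!w. (v,w) \<in> E) \<and>
     (\<forall>u w. (u,w) \<in> E \<longrightarrow>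
        (fst u \<noteq> fst w \<longrightarrow> (snd u \<le> r \<longleftrightarrow> snd w \<le> r)) \<and>
        (fst u = fst w \<longrightarrow> (snd u \<le> r \<longleftrightarrow> r < snd w)))"

definition WB :: "nat \<Rightarrow> nat \<Rightarrow> diagram set" where
  "WB r s = {E. walled_diagram r s E}"

text \<open>Stacking: d1 below d2. Layer 0 = bottom row of d1, layer 1 = top row of d1
  identified with bottom row of d2, layer 2 = top row of d2.\<close>

definition stack_graph :: "diagram \<Rightarrow> diagram \<Rightarrow> ((nat \<times> nat) \<times> (nat \<times> nat)) set" where
  "stack_graph d1 d2 =
     (\<lambda>(u,w). ((if fst u then 1 else 0, snd u), (if fst w then 1 else 0, snd w))) ` d1 \<union>
     (\<lambda>(u,w). ((if fst u then 2 else 1, snd u), (if fst w then 2 else 1, snd w))) ` d2"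

definition lift_outer :: "vtx \<Rightarrow> nat \<times> nat" where
  "lift_outer v = (if fst v then 2 else 0, snd v)"

definition comp_diag :: "diagram \<Rightarrow> diagram \<Rightarrow> diagram" where
  "comp_diag d1 d2 = {(u,w). u \<noteq> w \<and> (lift_outer u, lift_outer w) \<in> (stack_graph d1 d2)\<^sup>+}"

definition loops :: "nat \<Rightarrow> diagram \<Rightarrow> diagram \<Rightarrow> nat" where
  "loops n d1 d2 =
     card ((\<lambda>m. (stack_graph d1 d2)\<^sup>* `` {m}) `
       {m. \<exists>i\<in>{1..n}. m = (1,i) \<and>
            (\<forall>v\<in>verts n. (m, lift_outer v) \<notin> (stack_graph d1 d2)\<^sup>*)})"

text \<open>Elements of B_{r,s}(delta): coefficient functions on diagrams.\<close>

type_synonym elt = "diagram \<Rightarrow> complex"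

definition wb_mult :: "nat \<Rightarrow> nat \<Rightarrow> complex \<Rightarrow> elt \<Rightarrow> elt \<Rightarrow> elt" where
  "wb_mult r s \<delta> x y = (\<lambda>d. \<Sum>d1\<in>WB r s. \<Sum>d2\<in>WB r s.
      if comp_diag d1 d2 = d then x d1 * y d2 * \<delta> ^ loops (r+s) d1 d2 else 0)"

definition basis :: "diagram \<Rightarrow> elt" where
  "basis E = (\<lambda>d. if d = E then 1 else 0)"

definition symc :: "diagram \<Rightarrow> diagram" where
  "symc R = R \<union> R\<inverse>"

definition straight_except :: "nat \<Rightarrow> nat set \<Rightarrow> diagram" where
  "straight_except n S = {((True,i),(False,i)) | i. i \<in> {1..n} - S}"

definition id_diag :: "nat \<Rightarrow> diagram" where
  "id_diag n = symc (straight_except n {})"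

definition transp_diag :: "nat \<Rightarrow> nat \<Rightarrow> nat \<Rightarrow> diagram" where
  "transp_diag n a b = symc (straight_except n {a,b} \<union>
      {((True,a),(False,b)), ((True,b),(False,a))})"

definition e_diag :: "nat \<Rightarrow> nat \<Rightarrow> nat \<Rightarrow> diagram" where
  "e_diag n j k = symc (straight_except n {j,k} \<union>
      {((True,j),(True,k)), ((False,j),(False,k))})"

definition wb_one :: "nat \<Rightarrow> nat \<Rightarrow> elt" where
  "wb_one r s = basis (id_diag (r+s))"

definition tr :: "nat \<Rightarrow> nat \<Rightarrow> nat \<Rightarrow> nat \<Rightarrow> elt" where
  "tr r s a b = basis (transp_diag (r+s) a b)"

definition ee :: "nat \<Rightarrow> nat \<Rightarrow> nat \<Rightarrow> nat \<Rightarrow> elt" where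
  "ee r s j k = basis (e_diag (r+s) j k)"

text \<open>Jucys--Murphy elements L_k (addition, negation, sums are pointwise on coefficients)\<close>
definition JM :: "nat \<Rightarrow> nat \<Rightarrow> complex \<Rightarrow> nat \<Rightarrow> elt" where
  "JM r s \<delta> k =
     (if k \<le> r then (\<Sum>j\<in>{1..<k}. tr r s j k)
      else - (\<Sum>j\<in>{1..r}. ee r s j k) + (\<Sum>j\<in>{r+1..<k}. tr r s j k)
           + (\<lambda>d. \<delta> * wb_one r s d))"

fun tau :: "nat \<Rightarrow> nat \<Rightarrow> complex \<Rightarrow> nat \<Rightarrow> elt" where
  "tau r s \<delta> 0 = wb_one r s"
| "tau r s \<delta> (Suc k) = wb_mult r s \<delta> (tau r s \<delta> k) (ee r s (r - k) (r + k + 1))"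

end

theory Submission
  imports Defs
begin


definition L1 :: "vtx \<Rightarrow> nat \<times> nat" where "L1 v = (if fst v then 1 else 0, snd v)"
definition L2 :: "vtx \<Rightarrow> nat \<times> nat" where "L2 v = (if fst v then 2 else 1, snd v)"
definition gr :: "nat \<Rightarrow> (vtx \<Rightarrow> vtx) \<Rightarrow> diagram" where
  "gr n f = {(v, f v) | v. v \<in> verts n}"
definition invol :: "nat \<Rightarrow> (vtx \<Rightarrow> vtx) \<Rightarrow> bool" where
  "invol n f \<longleftrightarrow> (\<forall>v\<in>verts n. f v \<in> verts n \<and> f (f v) = v \<and> f v \<noteq> v)"

lemma L1_simps[simp]: "L1 (True,m) = (1,m)" "L1 (False,m) = (0,m)" by (auto simp: L1_def)
lemma L2_simps[simp]: "L2 (True,m) = (2,m)" "L2 (False,m) = (1,m)" by (auto simp: L2_def)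
lemma lift_simps[simp]: "lift_outer (True,m) = (2,m)" "lift_outer (False,m) = (0,m)"
  by (auto simp: lift_outer_def)

lemma verts_iff[simp]: "(b,m) \<in> verts n \<longleftrightarrow> m \<in> {1..n}" by (auto simp: verts_def)

lemma gr_iff[simp]: "(u,w) \<in> gr n h \<longleftrightarrow> u \<in> verts n \<and> w = h u"
  unfolding gr_def by blast

lemma img_gr: "(\<lambda>(u,w). (F u, F w)) ` gr n g = {(F v, F (g v)) | v. v \<in> verts n}"
  unfolding gr_def Setcompr_eq_image image_image by simp

lemma stack_gr: "stack_graph (gr n g) (gr n f) =
   {(L1 v, L1 (g v)) | v. v \<in> verts n} \<union> {(L2 v, L2 (f v)) | v. v \<in> verts n}"
proof -
  have 1: "(\<lambda>(u,w). ((if fst u then 1 else 0, snd u), (if fst w then 1 else 0, snd w))) = (\<lambda>(u::vtx,w::vtx). (L1 u, L1 w))"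
    by (simp add: L1_def fun_eq_iff)
  have 2: "(\<lambda>(u,w). ((if fst u then 2 else 1, snd u), (if fst w then 2 else 1, snd w))) = (\<lambda>(u::vtx,w::vtx). (L2 u, L2 w))"
    by (simp add: L2_def fun_eq_iff)
  show ?thesis unfolding stack_graph_def 1 2 img_gr ..
qed

definition Pset :: "vtx set \<Rightarrow> nat set \<Rightarrow> (nat \<times> nat) set" where
  "Pset A B = lift_outer ` A \<union> (\<lambda>m. (1::nat, m)) ` B"

lemma lift_inj[simp]: "lift_outer w = lift_outer w' \<longleftrightarrow> w = w'"
  by (cases w; cases w') (auto simp: lift_outer_def)
lemma lift_in[simp]: "lift_outer w \<in> Pset A B \<longleftrightarrow> w \<in> A"
proof -
  have "lift_outer w \<notin> (\<lambda>m. (1::nat, m)) ` B" by (cases w) (auto simp: lift_outer_def)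
  moreover have "lift_outer w \<in> lift_outer ` A \<longleftrightarrow> w \<in> A" by (auto simp: image_iff)
  ultimately show ?thesis unfolding Pset_def by blast
qed

lemma out0_in[simp]: "(0::nat, m) \<in> Pset A B \<longleftrightarrow> (False,m) \<in> A"
  using lift_in[of "(False,m)" A B] by simp
lemma out2_in[simp]: "(2::nat, m) \<in> Pset A B \<longleftrightarrow> (True,m) \<in> A"
  using lift_in[of "(True,m)" A B] by simp
lemma mid_in[simp]: "(Suc 0, m) \<in> Pset A B \<longleftrightarrow> m \<in> B"
  by (auto simp: Pset_def lift_outer_def split: if_splits)

lemma L1_in[simp]: "L1 (b,m) \<in> Pset A B \<longleftrightarrow> (if b then m \<in> B else (False,m) \<in> A)"
  by (cases b) auto
lemma L2_in[simp]: "L2 (b,m) \<in> Pset A B \<longleftrightarrow> (if b then (True,m) \<in> A else m \<in> B)"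
  by (cases b) auto

definition clos :: "(vtx \<Rightarrow> vtx) \<Rightarrow> (vtx \<Rightarrow> vtx) \<Rightarrow> vtx set \<Rightarrow> nat set \<Rightarrow> bool" where
  "clos g f A B \<longleftrightarrow> (\<forall>m. (False,m) \<in> A \<longrightarrow> L1 (g (False,m)) \<in> Pset A B)
     \<and> (\<forall>m. (True,m) \<in> A \<longrightarrow> L2 (f (True,m)) \<in> Pset A B)
     \<and> (\<forall>m\<in>B. L1 (g (True,m)) \<in> Pset A B \<and> L2 (f (False,m)) \<in> Pset A B)"

lemma clos_step:
  assumes "clos g f A B" "(x,y) \<in> stack_graph (gr n g) (gr n f)" "x \<in> Pset A B"
  shows "y \<in> Pset A B"
proof -
  from assms(2) obtain v where "v \<in> verts n" and
    e: "(x = L1 v \<and> y = L1 (g v)) \<or> (x = L2 v \<and> y = L2 (f v))"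
    unfolding stack_gr by blast
  obtain b m where v: "v = (b,m)" by (cases v)
  show ?thesis using e assms(1,3) unfolding v clos_def
    by (cases b) auto
qed

lemma clos_trancl:
  assumes "clos g f A B" "(x,y) \<in> (stack_graph (gr n g) (gr n f))\<^sup>+" "x \<in> Pset A B"
  shows "y \<in> Pset A B"
  using assms(2,3) by induction (auto intro: clos_step[OF assms(1)])

lemma lift_no_edge:
  assumes "(lift_outer u, y) \<in> stack_graph (gr n g) (gr n f)"
  shows "u \<in> verts n"
proof -
  from assms obtain v where "v \<in> verts n" and
    e: "(lift_outer u = L1 v) \<or> (lift_outer u = L2 v)"
    unfolding stack_gr by blast
  then show ?thesis
    by (cases u; cases v) (auto simp: lift_outer_def L1_def L2_def split: if_splits)
qed

lemma comp_gr:
  assumes "\<And>u. u \<in> verts n \<Longrightarrow> h u \<in> verts n \<and> h u \<noteq> u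
     \<and> (lift_outer u, lift_outer (h u)) \<in> (stack_graph (gr n g) (gr n f))\<^sup>+
     \<and> (\<exists>A B. u \<in> A \<and> A \<subseteq> {u, h u} \<and> clos g f A B)"
  shows "comp_diag (gr n g) (gr n f) = gr n h"
proof (rule set_eqI)
  fix x :: "vtx \<times> vtx"
  obtain u w where x: "x = (u,w)" by (cases x)
  show "x \<in> comp_diag (gr n g) (gr n f) \<longleftrightarrow> x \<in> gr n h"
  proof
    assume "x \<in> comp_diag (gr n g) (gr n f)"
    then have uw: "u \<noteq> w" and p: "(lift_outer u, lift_outer w) \<in> (stack_graph (gr n g) (gr n f))\<^sup>+"
      unfolding comp_diag_def x by auto
    have "u \<in> verts n" using p
      by (auto dest: tranclD lift_no_edge)
    then obtain A B where "u \<in> A" "A \<subseteq> {u, h u}" "clos g f A B" using assms by blast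
    then have "lift_outer w \<in> Pset A B" using clos_trancl[OF _ p] by auto
    then have "w = h u" using \<open>A \<subseteq> {u, h u}\<close> uw by auto
    then show "x \<in> gr n h" using \<open>u \<in> verts n\<close> unfolding x by simp
  next
    assume "x \<in> gr n h"
    then have "u \<in> verts n" "w = h u" unfolding x by auto
    then show "x \<in> comp_diag (gr n g) (gr n f)"
      using assms[of u] unfolding x comp_diag_def by auto
  qed
qed

lemma loops_zero:
  assumes "\<And>m. m \<in> {1..n} \<Longrightarrow> \<exists>v\<in>verts n. ((1,m), lift_outer v) \<in> (stack_graph d1 d2)\<^sup>*"
  shows "loops n d1 d2 = 0"
proof -
  have "{m. \<exists>i\<in>{1..n}. m = (1,i) \<and>
            (\<forall>v\<in>verts n. (m, lift_outer v) \<notin> (stack_graph d1 d2)\<^sup>*)} = {}"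
  proof (rule equals0I)
    fix x assume "x \<in> {m. \<exists>i\<in>{1..n}. m = (1,i) \<and>
            (\<forall>v\<in>verts n. (m, lift_outer v) \<notin> (stack_graph d1 d2)\<^sup>*)}"
    then obtain i where "i \<in> {1..n}" "\<forall>v\<in>verts n. ((1,i), lift_outer v) \<notin> (stack_graph d1 d2)\<^sup>*"
      by blast
    then show False using assms[of i] by blast
  qed
  then show ?thesis unfolding loops_def by simp
qed

lemma edge1: "v \<in> verts n \<Longrightarrow> (L1 v, L1 (g v)) \<in> stack_graph (gr n g) (gr n f)"
  unfolding stack_gr by blast
lemma edge2: "v \<in> verts n \<Longrightarrow> (L2 v, L2 (f v)) \<in> stack_graph (gr n g) (gr n f)"
  unfolding stack_gr by blast

lemma stack_sym:
  assumes "invol n g" "invol n f"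
  shows "sym (stack_graph (gr n g) (gr n f))"
proof (rule symI)
  fix x y assume "(x,y) \<in> stack_graph (gr n g) (gr n f)"
  then obtain v where "v \<in> verts n" and
    e: "(x = L1 v \<and> y = L1 (g v)) \<or> (x = L2 v \<and> y = L2 (f v))"
    unfolding stack_gr by blast
  then show "(y,x) \<in> stack_graph (gr n g) (gr n f)"
  proof (elim disjE conjE)
    assume "x = L1 v" "y = L1 (g v)"
    moreover have "g v \<in> verts n" "g (g v) = v" using assms(1) \<open>v \<in> verts n\<close> unfolding invol_def by auto
    ultimately show ?thesis using edge1[where v="g v" and n=n and g=g and f=f] by simp
  next
    assume "x = L2 v" "y = L2 (f v)"
    moreover have "f v \<in> verts n" "f (f v) = v" using assms(2) \<open>v \<in> verts n\<close> unfolding invol_def by auto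
    ultimately show ?thesis using edge2[where v="f v" and n=n and g=g and f=f] by simp
  qed
qed

lemma sym_rtr: "sym G \<Longrightarrow> (x,y) \<in> G\<^sup>* \<Longrightarrow> (y,x) \<in> G\<^sup>*"
  by (metis sym_conv_converse_eq rtrancl_converseI rtrancl_converse)

lemma path3: "(a,b) \<in> G\<^sup>* \<Longrightarrow> (b,c) \<in> G \<Longrightarrow> (c,d) \<in> G\<^sup>* \<Longrightarrow> (a,d) \<in> G\<^sup>+"
  by (meson rtrancl_into_trancl1 trancl_rtrancl_trancl)

definition tp :: "(nat \<Rightarrow> nat) \<Rightarrow> vtx \<Rightarrow> vtx" where "tp \<sigma> v = (\<not> fst v, \<sigma> (snd v))"
definition Sb :: "(nat \<Rightarrow> nat) \<Rightarrow> vtx \<Rightarrow> vtx" where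
  "Sb \<sigma> v = (if fst v then v else (False, \<sigma> (snd v)))"

lemma tp_simps[simp]: "tp \<sigma> (b,m) = (\<not> b, \<sigma> m)" by (simp add: tp_def)
lemma Sb_simps[simp]: "Sb \<sigma> (True,m) = (True,m)" "Sb \<sigma> (False,m) = (False, \<sigma> m)" by (auto simp: Sb_def)

definition perm_on :: "nat \<Rightarrow> (nat \<Rightarrow> nat) \<Rightarrow> bool" where
  "perm_on n \<sigma> \<longleftrightarrow> (\<forall>k\<in>{1..n}. \<sigma> k \<in> {1..n} \<and> \<sigma> (\<sigma> k) = k)"

lemma Sb_verts: "perm_on n \<sigma> \<Longrightarrow> v \<in> verts n \<Longrightarrow> Sb \<sigma> v \<in> verts n \<and> Sb \<sigma> (Sb \<sigma> v) = v"
  by (cases v; cases "fst v") (auto simp: perm_on_def)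

lemma invol_tp: "perm_on n \<sigma> \<Longrightarrow> invol n (tp \<sigma>)"
  unfolding invol_def perm_on_def by (auto simp: tp_def verts_def)

lemma perm_mult:
  assumes f: "invol n f" and s: "perm_on n \<sigma>"
  shows "comp_diag (gr n (tp \<sigma>)) (gr n f) = gr n (\<lambda>v. Sb \<sigma> (f (Sb \<sigma> v)))"
    and "loops n (gr n (tp \<sigma>)) (gr n f) = 0"
proof -
  let ?G = "stack_graph (gr n (tp \<sigma>)) (gr n f)"
  have sym: "sym ?G" by (rule stack_sym[OF invol_tp[OF s] f])
  have conn: "(L2 z, lift_outer (Sb \<sigma> z)) \<in> ?G\<^sup>*" if z: "z \<in> verts n" for z
  proof (cases z)
    case (Pair b m)
    show ?thesis
    proof (cases b)
      case True then show ?thesis using Pair by simp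
    next
      case False
      have "(L1 (True,m), L1 (tp \<sigma> (True,m))) \<in> ?G" by (rule edge1) (use z Pair in auto)
      then show ?thesis using Pair False by simp
    qed
  qed
  have inW: "L2 z \<in> Pset (Sb \<sigma> ` W) {k. (False,k) \<in> W}" if "z \<in> W" for z W
  proof (cases z)
    case (Pair b m)
    then show ?thesis using that
      by (cases b) (auto simp: image_iff intro!: bexI[of _ "(True,m)"])
  qed
  show "comp_diag (gr n (tp \<sigma>)) (gr n f) = gr n (\<lambda>v. Sb \<sigma> (f (Sb \<sigma> v)))"
  proof (rule comp_gr)
    fix u assume u: "u \<in> verts n"
    define w where "w = Sb \<sigma> u"
    have w: "w \<in> verts n" "Sb \<sigma> w = u" using Sb_verts[OF s u] w_def by auto
    have fw: "f w \<in> verts n" "f (f w) = w" "f w \<noteq> w" using f w unfolding invol_def by auto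
    have hu: "Sb \<sigma> (f w) \<in> verts n" using Sb_verts[OF s fw(1)] by simp
    have ne: "Sb \<sigma> (f w) \<noteq> u"
      using Sb_verts[OF s fw(1)] Sb_verts[OF s w(1)] w fw(3) by metis
    have p: "(lift_outer u, lift_outer (Sb \<sigma> (f w))) \<in> ?G\<^sup>+"
    proof (rule path3)
      show "(lift_outer u, L2 w) \<in> ?G\<^sup>*" using sym_rtr[OF sym conn[OF w(1)]] w by simp
      show "(L2 w, L2 (f w)) \<in> ?G" by (rule edge2[OF w(1)])
      show "(L2 (f w), lift_outer (Sb \<sigma> (f w))) \<in> ?G\<^sup>*" by (rule conn[OF fw(1)])
    qed
    define W where "W = {w, f w}"
    have fW: "z \<in> W \<Longrightarrow> f z \<in> W" for z using fw unfolding W_def by auto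
    have Wv: "z \<in> W \<Longrightarrow> z \<in> verts n" for z using fw w unfolding W_def by auto
    have cl: "clos (tp \<sigma>) f (Sb \<sigma> ` W) {k. (False,k) \<in> W}"
      unfolding clos_def
    proof (intro conjI allI impI ballI)
      fix m assume "(False, m) \<in> Sb \<sigma> ` W"
      then obtain z where z: "z \<in> W" "(False,m) = Sb \<sigma> z" by auto
      then obtain k where zk: "z = (False,k)" by (cases z; cases "fst z") auto
      then have "m = \<sigma> k" "k \<in> {1..n}" using z Wv[of z] by auto
      then have "\<sigma> m = k" using s unfolding perm_on_def by auto
      then show "L1 (tp \<sigma> (False, m)) \<in> Pset (Sb \<sigma> ` W) {k. (False, k) \<in> W}"
        using z zk by simp
    next
      fix m assume "(True, m) \<in> Sb \<sigma> ` W"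
      then obtain z where z: "z \<in> W" "(True,m) = Sb \<sigma> z" by auto
      then have "z = (True,m)" by (cases z; cases "fst z") auto
      then show "L2 (f (True, m)) \<in> Pset (Sb \<sigma> ` W) {k. (False, k) \<in> W}"
        using inW fW z by metis
    next
      fix m assume m: "m \<in> {k. (False, k) \<in> W}"
      then have "(False,\<sigma> m) \<in> Sb \<sigma> ` W" by (auto intro!: image_eqI[of _ _ "(False,m)"])
      then show "L1 (tp \<sigma> (True, m)) \<in> Pset (Sb \<sigma> ` W) {k. (False, k) \<in> W}" by simp
      show "L2 (f (False, m)) \<in> Pset (Sb \<sigma> ` W) {k. (False, k) \<in> W}"
        using inW fW m by auto
    qed
    have "Sb \<sigma> ` W = {u, Sb \<sigma> (f w)}" unfolding W_def using w by auto
    then show "Sb \<sigma> (f (Sb \<sigma> u)) \<in> verts n \<and> Sb \<sigma> (f (Sb \<sigma> u)) \<noteq> u \<and>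
          (lift_outer u, lift_outer (Sb \<sigma> (f (Sb \<sigma> u)))) \<in> ?G\<^sup>+ \<and>
          (\<exists>A B. u \<in> A \<and> A \<subseteq> {u, Sb \<sigma> (f (Sb \<sigma> u))} \<and> clos (tp \<sigma>) f A B)"
      using hu ne p cl unfolding w_def by auto
  qed
  show "loops n (gr n (tp \<sigma>)) (gr n f) = 0"
  proof (rule loops_zero)
    fix m assume m: "m \<in> {1..n}"
    have "(L1 (True,m), L1 (tp \<sigma> (True,m))) \<in> ?G" by (rule edge1) (use m in auto)
    moreover have "(False, \<sigma> m) \<in> verts n" using m s unfolding perm_on_def by auto
    ultimately show "\<exists>v\<in>verts n. ((1, m), lift_outer v) \<in> ?G\<^sup>*"
      by (auto intro!: bexI[of _ "(False, \<sigma> m)"])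
  qed
qed

definition ef :: "nat \<Rightarrow> nat \<Rightarrow> vtx \<Rightarrow> vtx" where
  "ef i j v = (if snd v = i then (fst v, j) else if snd v = j then (fst v, i) else (\<not> fst v, snd v))"

lemma ef_simps[simp]: "ef i j (b,i) = (b,j)" "i \<noteq> j \<Longrightarrow> ef i j (b,j) = (b,i)"
  "m \<noteq> i \<Longrightarrow> m \<noteq> j \<Longrightarrow> ef i j (b,m) = (\<not> b, m)"
  by (auto simp: ef_def)

lemma invol_ef: "i \<noteq> j \<Longrightarrow> i \<in> {1..n} \<Longrightarrow> j \<in> {1..n} \<Longrightarrow> invol n (ef i j)"
  unfolding invol_def by (auto simp: ef_def verts_def)

lemma inW2: "z \<in> A \<Longrightarrow> (\<And>k. z = (False,k) \<Longrightarrow> k \<in> B) \<Longrightarrow> L2 z \<in> Pset A B"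
  by (cases z; cases "fst z") auto
lemma inW1: "z \<in> A \<Longrightarrow> (\<And>k. z = (True,k) \<Longrightarrow> k \<in> B) \<Longrightarrow> L1 z \<in> Pset A B"
  by (cases z; cases "fst z") auto

lemma sym_tr: "sym G \<Longrightarrow> (x,y) \<in> G\<^sup>+ \<Longrightarrow> (y,x) \<in> G\<^sup>+"
  by (meson symD sym_trancl)

lemma involD: "invol n f \<Longrightarrow> v \<in> verts n \<Longrightarrow> f v \<in> verts n \<and> f (f v) = v \<and> f v \<noteq> v"
  unfolding invol_def by blast

definition eres :: "nat \<Rightarrow> nat \<Rightarrow> (vtx \<Rightarrow> vtx) \<Rightarrow> vtx \<Rightarrow> vtx" where
  "eres i j f v = (if v = (False,i) then (False,j) else if v = (False,j) then (False,i)
     else if v = f (False,i) then f (False,j) else if v = f (False,j) then f (False,i) else f v)"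

lemma e_mult:
  assumes f: "invol n f" and ij: "i \<noteq> j" "i \<in> {1..n}" "j \<in> {1..n}"
    and nl: "f (False,i) \<noteq> (False,j)"
  shows "comp_diag (gr n (ef i j)) (gr n f) = gr n (eres i j f)"
    and "loops n (gr n (ef i j)) (gr n f) = 0"
proof -
  let ?G = "stack_graph (gr n (ef i j)) (gr n f)"
  have sym: "sym ?G" by (rule stack_sym[OF invol_ef[OF ij] f])
  define x where "x = f (False,i)"
  define y where "y = f (False,j)"
  have vi: "(False,i) \<in> verts n" "(False,j) \<in> verts n" using ij by auto
  have x: "x \<in> verts n" "f x = (False,i)" "x \<noteq> (False,i)" "x \<noteq> (False,j)"
    using involD[OF f vi(1)] nl unfolding x_def by auto
  have y123: "y \<in> verts n" "f y = (False,j)" "y \<noteq> (False,j)"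
    using involD[OF f vi(2)] unfolding y_def by auto
  have y4: "y \<noteq> (False,i)"
  proof
    assume "y = (False,i)"
    then have "f (False,i) = (False,j)" using y123(2) by simp
    with nl show False ..
  qed
  note y = y123 y4
  have xy: "x \<noteq> y" using x(2) y(2) ij(1) by auto
  have conn: "(L2 z, lift_outer z) \<in> ?G\<^sup>*" if z: "z \<in> verts n" "z \<noteq> (False,i)" "z \<noteq> (False,j)" for z
  proof (cases z)
    case (Pair b m)
    show ?thesis
    proof (cases b)
      case True then show ?thesis using Pair by simp
    next
      case False
      then have "m \<noteq> i" "m \<noteq> j" using z Pair by auto
      have "(L1 (True,m), L1 (ef i j (True,m))) \<in> ?G" by (rule edge1) (use z Pair in auto)
      then show ?thesis using Pair False \<open>m \<noteq> i\<close> \<open>m \<noteq> j\<close> by simp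
    qed
  qed
  have pxy: "(lift_outer x, lift_outer y) \<in> ?G\<^sup>+"
  proof -
    have a: "(lift_outer x, L2 x) \<in> ?G\<^sup>*" using sym_rtr[OF sym conn[OF x(1,3,4)]] .
    have b: "(L2 x, (1,i)) \<in> ?G" using edge2[OF x(1), where g="ef i j" and f=f] x(2) by simp
    have c: "((1,i),(1,j)) \<in> ?G" using edge1[where v="(True,i)" and n=n and g="ef i j" and f=f] ij by simp
    have d: "((1,j), L2 y) \<in> ?G" using edge2[OF vi(2), where g="ef i j" and f=f] unfolding y_def by simp
    have e: "(L2 y, lift_outer y) \<in> ?G\<^sup>*" using conn[OF y(1,4,3)] .
    have "(lift_outer x, (1,i)) \<in> ?G\<^sup>+" using rtrancl_into_trancl1[OF a b] .
    then have "(lift_outer x, (1,j)) \<in> ?G\<^sup>+" using c by (rule trancl_into_trancl)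
    then have "(lift_outer x, L2 y) \<in> ?G\<^sup>+" using d by (rule trancl_into_trancl)
    then show ?thesis using e by (rule trancl_rtrancl_trancl)
  qed
  show "comp_diag (gr n (ef i j)) (gr n f) = gr n (eres i j f)"
  proof (rule comp_gr)
    fix u assume u: "u \<in> verts n"
    show "eres i j f u \<in> verts n \<and> eres i j f u \<noteq> u \<and>
          (lift_outer u, lift_outer (eres i j f u)) \<in> ?G\<^sup>+ \<and>
          (\<exists>A B. u \<in> A \<and> A \<subseteq> {u, eres i j f u} \<and> clos (ef i j) f A B)"
    proof (cases "u = (False,i) \<or> u = (False,j)")
      case True
      have cl: "clos (ef i j) f {(False,i),(False,j)} {}"
        unfolding clos_def using ij(1) by simp
      have e1: "((0,i),(0,j)) \<in> ?G" using edge1[OF vi(1), where g="ef i j" and f=f] by simp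
      have e2: "((0,j),(0,i)) \<in> ?G" using edge1[OF vi(2), where g="ef i j" and f=f] ij(1) by simp
      have h1: "eres i j f (False,i) = (False,j)" "eres i j f (False,j) = (False,i)"
        using ij(1) by (auto simp: eres_def)
      from True show ?thesis
      proof
        assume uu: "u = (False,i)"
        show ?thesis unfolding uu h1 using cl e1 vi ij(1)
          by (intro conjI exI[of _ "{(False,i),(False,j)}"] exI[of _ "{}"]) auto
      next
        assume uu: "u = (False,j)"
        show ?thesis unfolding uu h1 using cl e2 vi ij(1)
          by (intro conjI exI[of _ "{(False,i),(False,j)}"] exI[of _ "{}"]) auto
      qed
    next
      case False
      show ?thesis
      proof (cases "u = x \<or> u = y")
        case True
        have h: "eres i j f x = y" "eres i j f y = x"
          using x y xy False unfolding eres_def x_def y_def by auto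
        have cl: "clos (ef i j) f {x,y} ({i,j} \<union> {k. (False,k) \<in> {x,y}})"
          unfolding clos_def
        proof (intro conjI allI impI ballI)
          fix m assume m: "(False, m) \<in> {x, y}"
          then have "m \<noteq> i" "m \<noteq> j" using x y by auto
          then show "L1 (ef i j (False, m)) \<in> Pset {x, y} ({i, j} \<union> {k. (False, k) \<in> {x, y}})"
            using m by simp
        next
          fix m assume m: "(True, m) \<in> {x, y}"
          then have "f (True,m) \<in> {(False,i),(False,j)}" using x y by auto
          then show "L2 (f (True, m)) \<in> Pset {x, y} ({i, j} \<union> {k. (False, k) \<in> {x, y}})"
            by auto
        next
          fix m assume m: "m \<in> {i, j} \<union> {k. (False, k) \<in> {x, y}}"
          show "L1 (ef i j (True, m)) \<in> Pset {x, y} ({i, j} \<union> {k. (False, k) \<in> {x, y}})"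
          proof (cases "m \<in> {i,j}")
            case True then show ?thesis using ij by auto
          next
            case False
            then show ?thesis using m by auto
          qed
          show "L2 (f (False, m)) \<in> Pset {x, y} ({i, j} \<union> {k. (False, k) \<in> {x, y}})"
          proof (cases "m \<in> {i,j}")
            case True
            then have "f (False,m) \<in> {x,y}" unfolding x_def y_def by auto
            then show ?thesis by (intro inW2) auto
          next
            case False
            then have "(False,m) \<in> {x,y}" using m by auto
            then have "f (False,m) \<in> {(False,i),(False,j)}" using x y by auto
            then show ?thesis by auto
          qed
        qed
        have "u \<in> verts n" using u .
        show ?thesis
        proof (cases "u = x")
          case True
          then show ?thesis using h pxy cl y(1) xy by (auto intro!: exI[of _ "{x,y}"])
        next
          case False
          then have "u = y" using \<open>u = x \<or> u = y\<close> by auto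
          then show ?thesis using h sym_tr[OF sym pxy] cl x(1) xy by (auto intro!: exI[of _ "{x,y}"])
        qed
      next
        case False2: False
        have fu: "f u \<in> verts n" "f (f u) = u" "f u \<noteq> u" using involD[OF f u] by auto
        have h: "eres i j f u = f u" using False False2 unfolding eres_def
          by (simp add: x_def[symmetric] y_def[symmetric])
        have fu2: "f u \<noteq> (False,i)" "f u \<noteq> (False,j)"
          using False2 fu(2) unfolding x_def y_def by auto
        have fu3: "f u \<noteq> x" "f u \<noteq> y"
          using False fu(2) x(2) y(2) by auto
        note fu2 = fu2 fu3
        have p: "(lift_outer u, lift_outer (f u)) \<in> ?G\<^sup>+"
        proof (rule path3)
          show "(lift_outer u, L2 u) \<in> ?G\<^sup>*" using sym_rtr[OF sym conn[OF u]] False by auto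
          show "(L2 u, L2 (f u)) \<in> ?G" by (rule edge2[OF u])
          show "(L2 (f u), lift_outer (f u)) \<in> ?G\<^sup>*" by (rule conn) (use fu fu2 in auto)
        qed
        have cl: "clos (ef i j) f {u, f u} {k. (False,k) \<in> {u, f u}}"
          unfolding clos_def
        proof (intro conjI allI impI ballI)
          fix m assume m: "(False, m) \<in> {u, f u}"
          then have "m \<noteq> i" "m \<noteq> j" using False fu2 by auto
          then show "L1 (ef i j (False, m)) \<in> Pset {u, f u} {k. (False, k) \<in> {u, f u}}"
            using m by simp
        next
          fix m assume m: "(True, m) \<in> {u, f u}"
          then have "f (True,m) \<in> {u, f u}" using fu by auto
          then show "L2 (f (True, m)) \<in> Pset {u, f u} {k. (False, k) \<in> {u, f u}}"
            by (intro inW2) auto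
        next
          fix m assume m: "m \<in> {k. (False, k) \<in> {u, f u}}"
          then have "m \<noteq> i" "m \<noteq> j" using False fu2 by auto
          then show "L1 (ef i j (True, m)) \<in> Pset {u, f u} {k. (False, k) \<in> {u, f u}}"
            using m by simp
          have "f (False,m) \<in> {u, f u}" using m fu by auto
          then show "L2 (f (False, m)) \<in> Pset {u, f u} {k. (False, k) \<in> {u, f u}}"
            by (intro inW2) auto
        qed
        show ?thesis using h p cl fu by (auto intro!: exI[of _ "{u, f u}"])
      qed
    qed
  qed
  show "loops n (gr n (ef i j)) (gr n f) = 0"
  proof (rule loops_zero)
    fix m assume m: "m \<in> {1..n}"
    show "\<exists>v\<in>verts n. ((1, m), lift_outer v) \<in> ?G\<^sup>*"
    proof (cases "m = i \<or> m = j")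
      case True
      have "(L2 (False,m), L2 (f (False,m))) \<in> ?G" by (rule edge2) (use m in auto)
      moreover have "f (False,m) \<in> {x,y}" using True unfolding x_def y_def by auto
      moreover have "(L2 z, lift_outer z) \<in> ?G\<^sup>*" if "z \<in> {x,y}" for z
        using that conn[OF x(1,3,4)] conn[OF y(1,4,3)] by auto
      ultimately have "((1,m), lift_outer (f (False,m))) \<in> ?G\<^sup>*"
        by (simp add: converse_rtrancl_into_rtrancl)
      then show ?thesis using \<open>f (False,m) \<in> {x,y}\<close> x y by auto
    next
      case False
      have "(L1 (True,m), L1 (ef i j (True,m))) \<in> ?G" by (rule edge1) (use m in auto)
      then show ?thesis using False m by (auto intro!: bexI[of _ "(False,m)"])
    qed
  qed
qed

lemma clos_rtrancl:
  assumes "clos g f A B" "(x,y) \<in> (stack_graph (gr n g) (gr n f))\<^sup>*" "x \<in> Pset A B"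
  shows "y \<in> Pset A B"
proof -
  from assms(2) have "x = y \<or> (x,y) \<in> (stack_graph (gr n g) (gr n f))\<^sup>+"
    by (auto dest: rtranclD)
  then show ?thesis using clos_trancl[OF assms(1)] assms(3) by blast
qed

lemma e_loop:
  assumes f: "invol n f" and ij: "i \<noteq> j" "i \<in> {1..n}" "j \<in> {1..n}"
    and lp: "f (False,i) = (False,j)"
  shows "comp_diag (gr n (ef i j)) (gr n f) = gr n f"
    and "loops n (gr n (ef i j)) (gr n f) = 1"
proof -
  let ?G = "stack_graph (gr n (ef i j)) (gr n f)"
  have sym: "sym ?G" by (rule stack_sym[OF invol_ef[OF ij] f])
  have vi: "(False,i) \<in> verts n" "(False,j) \<in> verts n" using ij by auto
  have lp2: "f (False,j) = (False,i)" using involD[OF f vi(1)] lp by auto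
  have conn: "(L2 z, lift_outer z) \<in> ?G\<^sup>*" if z: "z \<in> verts n" "z \<noteq> (False,i)" "z \<noteq> (False,j)" for z
  proof (cases z)
    case (Pair b m)
    show ?thesis
    proof (cases b)
      case True then show ?thesis using Pair by simp
    next
      case False
      then have "m \<noteq> i" "m \<noteq> j" using z Pair by auto
      have "(L1 (True,m), L1 (ef i j (True,m))) \<in> ?G" by (rule edge1) (use z Pair in auto)
      then show ?thesis using Pair False \<open>m \<noteq> i\<close> \<open>m \<noteq> j\<close> by simp
    qed
  qed
  show "comp_diag (gr n (ef i j)) (gr n f) = gr n f"
  proof (rule comp_gr)
    fix u assume u: "u \<in> verts n"
    show "f u \<in> verts n \<and> f u \<noteq> u \<and>
          (lift_outer u, lift_outer (f u)) \<in> ?G\<^sup>+ \<and>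
          (\<exists>A B. u \<in> A \<and> A \<subseteq> {u, f u} \<and> clos (ef i j) f A B)"
    proof (cases "u = (False,i) \<or> u = (False,j)")
      case True
      have cl: "clos (ef i j) f {(False,i),(False,j)} {}"
        unfolding clos_def using ij(1) by simp
      have e1: "((0,i),(0,j)) \<in> ?G" using edge1[OF vi(1), where g="ef i j" and f=f] by simp
      have e2: "((0,j),(0,i)) \<in> ?G" using edge1[OF vi(2), where g="ef i j" and f=f] ij(1) by simp
      from True show ?thesis
      proof
        assume uu: "u = (False,i)"
        show ?thesis unfolding uu lp using cl e1 vi ij(1)
          by (intro conjI exI[of _ "{(False,i),(False,j)}"] exI[of _ "{}"]) auto
      next
        assume uu: "u = (False,j)"
        show ?thesis unfolding uu lp2 using cl e2 vi ij(1)
          by (intro conjI exI[of _ "{(False,i),(False,j)}"] exI[of _ "{}"]) auto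
      qed
    next
      case False
      have fu: "f u \<in> verts n" "f (f u) = u" "f u \<noteq> u" using involD[OF f u] by auto
      have fu2: "f u \<noteq> (False,i)" "f u \<noteq> (False,j)"
        using False fu(2) lp lp2 by auto
      have p: "(lift_outer u, lift_outer (f u)) \<in> ?G\<^sup>+"
      proof (rule path3)
        show "(lift_outer u, L2 u) \<in> ?G\<^sup>*" using sym_rtr[OF sym conn[OF u]] False by auto
        show "(L2 u, L2 (f u)) \<in> ?G" by (rule edge2[OF u])
        show "(L2 (f u), lift_outer (f u)) \<in> ?G\<^sup>*" by (rule conn) (use fu fu2 in auto)
      qed
      have cl: "clos (ef i j) f {u, f u} {k. (False,k) \<in> {u, f u}}"
        unfolding clos_def
      proof (intro conjI allI impI ballI)
        fix m assume m: "(False, m) \<in> {u, f u}"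
        then have "m \<noteq> i" "m \<noteq> j" using False fu2 by auto
        then show "L1 (ef i j (False, m)) \<in> Pset {u, f u} {k. (False, k) \<in> {u, f u}}"
          using m by simp
      next
        fix m assume m: "(True, m) \<in> {u, f u}"
        then have "f (True,m) \<in> {u, f u}" using fu by auto
        then show "L2 (f (True, m)) \<in> Pset {u, f u} {k. (False, k) \<in> {u, f u}}"
          by (intro inW2) auto
      next
        fix m assume m: "m \<in> {k. (False, k) \<in> {u, f u}}"
        then have "m \<noteq> i" "m \<noteq> j" using False fu2 by auto
        then show "L1 (ef i j (True, m)) \<in> Pset {u, f u} {k. (False, k) \<in> {u, f u}}"
          using m by simp
        have "f (False,m) \<in> {u, f u}" using m fu by auto
        then show "L2 (f (False, m)) \<in> Pset {u, f u} {k. (False, k) \<in> {u, f u}}"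
          by (intro inW2) auto
      qed
      show ?thesis using p cl fu by (auto intro!: exI[of _ "{u, f u}"])
    qed
  qed
  have cl0: "clos (ef i j) f {} {i,j}" unfolding clos_def using ij(1) lp lp2 by auto
  have M: "{m. \<exists>k\<in>{1..n}. m = (1,k) \<and> (\<forall>v\<in>verts n. (m, lift_outer v) \<notin> ?G\<^sup>*)}
      = {(1,i),(1,j)}" (is "?M = _")
  proof
    show "?M \<subseteq> {(1,i),(1,j)}"
    proof
      fix m assume "m \<in> ?M"
      then obtain k where k: "k \<in> {1..n}" "m = (1,k)" "\<forall>v\<in>verts n. (m, lift_outer v) \<notin> ?G\<^sup>*"
        by blast
      show "m \<in> {(1,i),(1,j)}"
      proof (rule ccontr)
        assume "m \<notin> {(1,i),(1,j)}"
        then have "k \<noteq> i" "k \<noteq> j" using k by auto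
        have "(L1 (True,k), L1 (ef i j (True,k))) \<in> ?G" by (rule edge1) (use k in auto)
        then have "(m, lift_outer (False,k)) \<in> ?G\<^sup>*" using k \<open>k \<noteq> i\<close> \<open>k \<noteq> j\<close> by auto
        moreover have "(False,k) \<in> verts n" using k by simp
        ultimately show False using k(3) by blast
      qed
    qed
    show "{(1,i),(1,j)} \<subseteq> ?M"
    proof -
      have "\<forall>v\<in>verts n. ((1,k), lift_outer v) \<notin> ?G\<^sup>*" if "k \<in> {i,j}" for k
      proof (intro ballI notI)
        fix v assume "((1,k), lift_outer v) \<in> ?G\<^sup>*"
        from clos_rtrancl[OF cl0 this] that show False by auto
      qed
      then show ?thesis using ij by auto
    qed
  qed
  have eq: "?G\<^sup>* `` {(1,i)} = ?G\<^sup>* `` {(1,j)}"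
  proof -
    have c: "((1,i),(1,j)) \<in> ?G" using edge1[where v="(True,i)" and n=n and g="ef i j" and f=f] ij by simp
    then have c2: "((1,j),(1,i)) \<in> ?G" using sym by (meson symD)
    show ?thesis using c c2 by (auto intro: converse_rtrancl_into_rtrancl)
  qed
  show "loops n (gr n (ef i j)) (gr n f) = 1"
    unfolding loops_def M using eq by simp
qed

definition rres :: "nat \<Rightarrow> nat \<Rightarrow> (vtx \<Rightarrow> vtx) \<Rightarrow> vtx \<Rightarrow> vtx" where
  "rres p q f v = (if v = (True,p) then (True,q) else if v = (True,q) then (True,p)
     else if v = (False,p) then (False,q) else if v = (False,q) then (False,p) else f v)"

lemma e_right:
  assumes f: "invol n f" and pq: "p \<noteq> q" "p \<in> {1..n}" "q \<in> {1..n}"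
    and sp: "f (True,p) = (False,p)" and sq: "f (True,q) = (False,q)"
  shows "comp_diag (gr n f) (gr n (ef p q)) = gr n (rres p q f)"
    and "loops n (gr n f) (gr n (ef p q)) = 0"
proof -
  let ?G = "stack_graph (gr n f) (gr n (ef p q))"
  have sym: "sym ?G" by (rule stack_sym[OF f invol_ef[OF pq]])
  have vp: "(True,p) \<in> verts n" "(True,q) \<in> verts n" "(False,p) \<in> verts n" "(False,q) \<in> verts n"
    using pq by auto
  have sp2: "f (False,p) = (True,p)" using involD[OF f vp(1)] sp by auto
  have sq2: "f (False,q) = (True,q)" using involD[OF f vp(2)] sq by auto
  have conn: "(L1 z, lift_outer z) \<in> ?G\<^sup>*" if z: "z \<in> verts n" "z \<noteq> (True,p)" "z \<noteq> (True,q)" for z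
  proof (cases z)
    case (Pair b m)
    show ?thesis
    proof (cases b)
      case False then show ?thesis using Pair by simp
    next
      case True
      then have "m \<noteq> p" "m \<noteq> q" using z Pair by auto
      have "(L2 (False,m), L2 (ef p q (False,m))) \<in> ?G" by (rule edge2) (use z Pair in auto)
      then show ?thesis using Pair True \<open>m \<noteq> p\<close> \<open>m \<noteq> q\<close> by simp
    qed
  qed
  have h1: "rres p q f (True,p) = (True,q)" "rres p q f (True,q) = (True,p)"
     "rres p q f (False,p) = (False,q)" "rres p q f (False,q) = (False,p)"
    using pq(1) by (auto simp: rres_def)
  show "comp_diag (gr n f) (gr n (ef p q)) = gr n (rres p q f)"
  proof (rule comp_gr)
    fix u assume u: "u \<in> verts n"
    show "rres p q f u \<in> verts n \<and> rres p q f u \<noteq> u \<and>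
          (lift_outer u, lift_outer (rres p q f u)) \<in> ?G\<^sup>+ \<and>
          (\<exists>A B. u \<in> A \<and> A \<subseteq> {u, rres p q f u} \<and> clos f (ef p q) A B)"
    proof (cases "u = (True,p) \<or> u = (True,q)")
      case True
      have cl: "clos f (ef p q) {(True,p),(True,q)} {}"
        unfolding clos_def using pq(1) by simp
      have e1: "((2,p),(2,q)) \<in> ?G" using edge2[OF vp(1), where g=f and f="ef p q"] by simp
      have e2: "((2,q),(2,p)) \<in> ?G" using edge2[OF vp(2), where g=f and f="ef p q"] pq(1) by simp
      from True show ?thesis
      proof
        assume uu: "u = (True,p)"
        show ?thesis unfolding uu h1 using cl e1 vp pq(1)
          by (intro conjI exI[of _ "{(True,p),(True,q)}"] exI[of _ "{}"]) auto
      next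
        assume uu: "u = (True,q)"
        show ?thesis unfolding uu h1 using cl e2 vp pq(1)
          by (intro conjI exI[of _ "{(True,p),(True,q)}"] exI[of _ "{}"]) auto
      qed
    next
      case False
      show ?thesis
      proof (cases "u = (False,p) \<or> u = (False,q)")
        case True
        have cl: "clos f (ef p q) {(False,p),(False,q)} {p,q}"
          unfolding clos_def using pq(1) sp sq sp2 sq2 by auto
        have a: "((0,p),(1,p)) \<in> ?G" using edge1[OF vp(3), where g=f and f="ef p q"] sp2 by simp
        have b: "((1,p),(1,q)) \<in> ?G" using edge2[OF vp(3), where g=f and f="ef p q"] by simp
        have c: "((1,q),(0,q)) \<in> ?G" using edge1[OF vp(2), where g=f and f="ef p q"] sq by simp
        have pth: "((0,p),(0,q)) \<in> ?G\<^sup>+" using a b c by (meson trancl.intros)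
        from True show ?thesis
        proof
          assume uu: "u = (False,p)"
          show ?thesis unfolding uu h1 using cl pth vp pq(1)
            by (intro conjI exI[of _ "{(False,p),(False,q)}"] exI[of _ "{p,q}"]) auto
        next
          assume uu: "u = (False,q)"
          show ?thesis unfolding uu h1 using cl sym_tr[OF sym pth] vp pq(1)
            by (intro conjI exI[of _ "{(False,p),(False,q)}"] exI[of _ "{p,q}"]) auto
        qed
      next
        case False2: False
        have fu: "f u \<in> verts n" "f (f u) = u" "f u \<noteq> u" using involD[OF f u] by auto
        have h: "rres p q f u = f u" using False False2 unfolding rres_def by auto
        have fu2: "f u \<noteq> (True,p)" "f u \<noteq> (True,q)" "f u \<noteq> (False,p)" "f u \<noteq> (False,q)"
          using False False2 fu(2) sp sq sp2 sq2 by auto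
        have pth: "(lift_outer u, lift_outer (f u)) \<in> ?G\<^sup>+"
        proof (rule path3)
          show "(lift_outer u, L1 u) \<in> ?G\<^sup>*" using sym_rtr[OF sym conn[OF u]] False by auto
          show "(L1 u, L1 (f u)) \<in> ?G" by (rule edge1[OF u])
          show "(L1 (f u), lift_outer (f u)) \<in> ?G\<^sup>*" by (rule conn) (use fu fu2 in auto)
        qed
        have cl: "clos f (ef p q) {u, f u} {k. (True,k) \<in> {u, f u}}"
          unfolding clos_def
        proof (intro conjI allI impI ballI)
          fix m assume m: "(False, m) \<in> {u, f u}"
          then have "f (False,m) \<in> {u, f u}" using fu by auto
          then show "L1 (f (False, m)) \<in> Pset {u, f u} {k. (True, k) \<in> {u, f u}}"
            by (intro inW1) auto
        next
          fix m assume m: "(True, m) \<in> {u, f u}"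
          then have "m \<noteq> p" "m \<noteq> q" using False fu2 by auto
          then show "L2 (ef p q (True, m)) \<in> Pset {u, f u} {k. (True, k) \<in> {u, f u}}"
            using m by simp
        next
          fix m assume m: "m \<in> {k. (True, k) \<in> {u, f u}}"
          then have "m \<noteq> p" "m \<noteq> q" using False fu2 by auto
          then show "L2 (ef p q (False, m)) \<in> Pset {u, f u} {k. (True, k) \<in> {u, f u}}"
            using m by simp
          have "f (True,m) \<in> {u, f u}" using m fu by auto
          then show "L1 (f (True, m)) \<in> Pset {u, f u} {k. (True, k) \<in> {u, f u}}"
            by (intro inW1) auto
        qed
        show ?thesis using h pth cl fu by (auto intro!: exI[of _ "{u, f u}"])
      qed
    qed
  qed
  show "loops n (gr n f) (gr n (ef p q)) = 0"
  proof (rule loops_zero)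
    fix m assume m: "m \<in> {1..n}"
    show "\<exists>v\<in>verts n. ((1, m), lift_outer v) \<in> ?G\<^sup>*"
    proof (cases "m = p \<or> m = q")
      case True
      have "(L1 (True,m), L1 (f (True,m))) \<in> ?G" by (rule edge1) (use m in auto)
      then have "((1,m), lift_outer (False,m)) \<in> ?G\<^sup>*" using True sp sq by auto
      then show ?thesis using m by (auto intro!: bexI[of _ "(False,m)"])
    next
      case False
      have "(L2 (False,m), L2 (ef p q (False,m))) \<in> ?G" by (rule edge2) (use m in auto)
      then show ?thesis using False m by (auto intro!: bexI[of _ "(True,m)"])
    qed
  qed
qed



definition swp :: "nat \<Rightarrow> nat \<Rightarrow> nat \<Rightarrow> nat" where
  "swp a b k = (if k = a then b else if k = b then a else k)"

lemma gr_cong: "(\<And>v. v \<in> verts n \<Longrightarrow> f v = g v) \<Longrightarrow> gr n f = gr n g"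
  unfolding gr_def by auto

lemma transp_gr: assumes "a \<noteq> b" "a \<in> {1..n}" "b \<in> {1..n}"
  shows "transp_diag n a b = gr n (tp (swp a b))"
proof (rule set_eqI)
  fix x :: "vtx \<times> vtx"
  obtain b1 m1 b2 m2 where x: "x = ((b1,m1),(b2,m2))" by (metis prod.collapse)
  show "x \<in> transp_diag n a b \<longleftrightarrow> x \<in> gr n (tp (swp a b))"
    unfolding x transp_diag_def symc_def straight_except_def using assms
    by (cases b1; cases b2) (auto simp: swp_def)
qed

lemma id_gr: "id_diag n = gr n (tp id)"
proof (rule set_eqI)
  fix x :: "vtx \<times> vtx"
  obtain b1 m1 b2 m2 where x: "x = ((b1,m1),(b2,m2))" by (metis prod.collapse)
  show "x \<in> id_diag n \<longleftrightarrow> x \<in> gr n (tp id)"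
    unfolding x id_diag_def symc_def straight_except_def
    by (cases b1; cases b2) auto
qed

lemma e_gr: assumes "a \<noteq> b" "a \<in> {1..n}" "b \<in> {1..n}"
  shows "e_diag n a b = gr n (ef a b)"
proof (rule set_eqI)
  fix x :: "vtx \<times> vtx"
  obtain b1 m1 b2 m2 where x: "x = ((b1,m1),(b2,m2))" by (metis prod.collapse)
  show "x \<in> e_diag n a b \<longleftrightarrow> x \<in> gr n (ef a b)"
    unfolding x e_diag_def symc_def straight_except_def using assms
    by (cases b1; cases b2) (auto simp: ef_def)
qed

definition wallc :: "nat \<Rightarrow> nat \<Rightarrow> (vtx \<Rightarrow> vtx) \<Rightarrow> bool" where
  "wallc r n f \<longleftrightarrow> (\<forall>v\<in>verts n. (fst v \<noteq> fst (f v) \<longrightarrow> (snd v \<le> r \<longleftrightarrow> snd (f v) \<le> r)) \<and>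
        (fst v = fst (f v) \<longrightarrow> (snd v \<le> r \<longleftrightarrow> r < snd (f v))))"

lemma gr_WB: assumes "invol (r+s) f" "wallc r (r+s) f" shows "gr (r+s) f \<in> WB r s"
proof -
  have 1: "gr (r + s) f \<subseteq> verts (r + s) \<times> verts (r + s)"
    using assms(1) unfolding invol_def gr_def by auto
  have 2: "sym (gr (r + s) f)"
    using assms(1) unfolding invol_def by (auto intro!: symI)
  have 3: "\<forall>v. (v, v) \<notin> gr (r + s) f" using assms(1) unfolding invol_def by (metis gr_iff)
  have 4: "\<forall>v\<in>verts (r+s). \<exists>!w. (v, w) \<in> gr (r + s) f" by auto
  have 5: "\<forall>u w. (u,w) \<in> gr (r+s) f \<longrightarrow> (fst u \<noteq> fst w \<longrightarrow> (snd u \<le> r) = (snd w \<le> r)) \<and>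
    (fst u = fst w \<longrightarrow> (snd u \<le> r) = (r < snd w))"
    using assms(2) unfolding wallc_def by auto
  show ?thesis unfolding WB_def walled_diagram_def using 1 2 3 4 5 by blast
qed

lemma tp_WB: assumes "a \<noteq> b" "a \<in> {1..r+s}" "b \<in> {1..r+s}" "a \<le> r \<longleftrightarrow> b \<le> r"
  shows "transp_diag (r+s) a b \<in> WB r s"
  unfolding transp_gr[OF assms(1-3)]
proof (rule gr_WB)
  have "perm_on (r+s) (swp a b)" using assms unfolding perm_on_def swp_def by auto
  then show "invol (r + s) (tp (swp a b))" by (rule invol_tp)
  show "wallc r (r + s) (tp (swp a b))" using assms unfolding wallc_def swp_def by (auto split: if_splits)
qed

lemma id_WB: "id_diag (r+s) \<in> WB r s"
  unfolding id_gr
proof (rule gr_WB)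
  have "perm_on (r+s) id" unfolding perm_on_def by auto
  then show "invol (r + s) (tp id)" by (rule invol_tp)
  show "wallc r (r + s) (tp id)" unfolding wallc_def by auto
qed

lemma e_WB: assumes "a \<in> {1..r}" "b \<in> {r+1..r+s}"
  shows "e_diag (r+s) a b \<in> WB r s"
proof -
  have ab: "a \<noteq> b" "a \<in> {1..r+s}" "b \<in> {1..r+s}" using assms by auto
  show ?thesis unfolding e_gr[OF ab]
  proof (rule gr_WB)
    show "invol (r + s) (ef a b)" by (rule invol_ef[OF ab])
    show "wallc r (r + s) (ef a b)" using assms unfolding wallc_def ef_def by auto
  qed
qed

lemma finite_WB: "finite (WB r s)"
proof -
  have "WB r s \<subseteq> Pow (verts (r+s) \<times> verts (r+s))"
    unfolding WB_def walled_diagram_def by auto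
  moreover have "finite (verts (r+s))" unfolding verts_def by simp
  ultimately show ?thesis by (meson finite_Pow_iff finite_SigmaI finite_subset)
qed

lemma wb_mult_basis:
  assumes "x \<in> WB r s" "y \<in> WB r s"
  shows "wb_mult r s \<delta> (basis x) (basis y) = (\<lambda>d. \<delta> ^ loops (r+s) x y * basis (comp_diag x y) d)"
proof
  fix d
  let ?C = "\<delta> ^ loops (r+s) x y * basis (comp_diag x y) d"
  have "wb_mult r s \<delta> (basis x) (basis y) d = (\<Sum>d1\<in>WB r s.
      if d1 = x then (\<Sum>d2\<in>WB r s. if d2 = y then ?C else 0) else 0)"
    unfolding wb_mult_def
  proof (rule sum.cong[OF refl])
    fix d1 assume "d1 \<in> WB r s"
    show "(\<Sum>d2\<in>WB r s. if comp_diag d1 d2 = d then basis x d1 * basis y d2 * \<delta> ^ loops (r + s) d1 d2 else 0)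
       = (if d1 = x then \<Sum>d2\<in>WB r s. if d2 = y then ?C else 0 else 0)"
    proof (cases "d1 = x")
      case True then show ?thesis by (auto simp: basis_def intro!: sum.cong)
    next
      case False then show ?thesis by (simp add: basis_def cong: if_cong)
    qed
  qed
  also have "\<dots> = ?C"
    using assms by (simp add: finite_WB)
  finally show "wb_mult r s \<delta> (basis x) (basis y) d = \<delta> ^ loops (r+s) x y * basis (comp_diag x y) d" .
qed

lemma sum_fun_apply: "(\<Sum>i\<in>I. F i) d = (\<Sum>i\<in>I. F i d)" for F :: "'i \<Rightarrow> 'a \<Rightarrow> 'b::comm_monoid_add"
  by (induction I rule: infinite_finite_induct) auto

lemma wb_mult_add: "wb_mult r s \<delta> (x + y) z = wb_mult r s \<delta> x z + wb_mult r s \<delta> y z"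
  unfolding wb_mult_def by (auto simp: fun_eq_iff sum.distrib[symmetric] distrib_right intro!: sum.cong)

lemma wb_mult_uminus: "wb_mult r s \<delta> (- x) z = - wb_mult r s \<delta> x z"
  unfolding wb_mult_def by (auto simp: fun_eq_iff sum_negf[symmetric] intro!: sum.cong)

lemma wb_mult_sum: "wb_mult r s \<delta> (\<Sum>i\<in>I. F i) z = (\<Sum>i\<in>I. wb_mult r s \<delta> (F i) z)"
proof (induction I rule: infinite_finite_induct)
  case (infinite A)
  then have 1: "sum F A = 0" and 2: "(\<Sum>i\<in>A. wb_mult r s \<delta> (F i) z) = 0" by simp_all
  show ?case unfolding 1 2 by (simp add: wb_mult_def fun_eq_iff cong: if_cong)
next
  case empty then show ?case by (simp add: wb_mult_def sum_fun_apply fun_eq_iff cong: if_cong)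
next
  case (insert a A)
  have "wb_mult r s \<delta> (sum F (insert a A)) z = wb_mult r s \<delta> (F a + sum F A) z"
    by (subst sum.insert[OF insert(1,2)]) (rule refl)
  also have "\<dots> = wb_mult r s \<delta> (F a) z + wb_mult r s \<delta> (sum F A) z" by (rule wb_mult_add)
  also have "\<dots> = (\<Sum>i\<in>insert a A. wb_mult r s \<delta> (F i) z)"
    by (subst sum.insert[OF insert(1,2)]) (simp only: insert(3))
  finally show ?case .
qed

lemma wb_mult_scale: "wb_mult r s \<delta> (\<lambda>d. c * x d) z = (\<lambda>d. c * wb_mult r s \<delta> x z d)"
  unfolding wb_mult_def by (auto simp: fun_eq_iff sum_distrib_left intro!: sum.cong)



definition Df :: "nat \<Rightarrow> nat \<Rightarrow> vtx \<Rightarrow> vtx" where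
  "Df r t v = (if r < snd v + t \<and> snd v \<le> r + t then (fst v, 2*r+1 - snd v) else (\<not> fst v, snd v))"

lemma Df_simp: "Df r t (b,m) = (if r < m + t \<and> m \<le> r + t then (b, 2*r+1 - m) else (\<not> b, m))"
  by (simp add: Df_def)

lemma par1[simp]: "Suc (2*r) - m \<noteq> (m::nat)" by presburger
lemma par2[simp]: "2*r + 1 - m \<noteq> (m::nat)" by presburger

lemma Df_invol: assumes "t \<le> r" "t \<le> s" shows "invol (r+s) (Df r t)"
  unfolding invol_def
proof
  fix v :: vtx assume v: "v \<in> verts (r+s)"
  obtain b m where vb: "v = (b,m)" by (cases v)
  show "Df r t v \<in> verts (r + s) \<and> Df r t (Df r t v) = v \<and> Df r t v \<noteq> v"
    using v assms unfolding vb by (auto simp: Df_simp)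
qed

lemma Df_wall: assumes "t \<le> r" "t \<le> s" shows "wallc r (r+s) (Df r t)"
  unfolding wallc_def
proof
  fix v :: vtx assume v: "v \<in> verts (r+s)"
  obtain b m where vb: "v = (b,m)" by (cases v)
  show "(fst v \<noteq> fst (Df r t v) \<longrightarrow> (snd v \<le> r) = (snd (Df r t v) \<le> r)) \<and>
        (fst v = fst (Df r t v) \<longrightarrow> (snd v \<le> r) = (r < snd (Df r t v)))"
    using v assms unfolding vb by (auto simp: Df_simp)
qed

lemma Df_WB: "t \<le> r \<Longrightarrow> t \<le> s \<Longrightarrow> gr (r+s) (Df r t) \<in> WB r s"
  by (rule gr_WB[OF Df_invol Df_wall])

lemma basis_one: "(\<lambda>d. 1 * basis X d) = basis X" by simp

lemma tau_basis: "k \<le> r \<Longrightarrow> k \<le> s \<Longrightarrow> tau r s \<delta> k = basis (gr (r+s) (Df r k))"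
proof (induction k)
  case 0
  have "gr (r+s) (Df r 0) = gr (r+s) (tp id)"
    by (rule gr_cong) (auto simp: Df_def tp_def)
  then show ?case by (simp add: wb_one_def id_gr)
next
  case (Suc k)
  define p where "p = r - k"
  define q where "q = r + k + 1"
  have pq: "p \<noteq> q" "p \<in> {1..r+s}" "q \<in> {1..r+s}" using Suc.prems unfolding p_def q_def by auto
  have eWB: "e_diag (r+s) p q \<in> WB r s" by (rule e_WB) (use Suc.prems in \<open>auto simp: p_def q_def\<close>)
  have kWB: "gr (r+s) (Df r k) \<in> WB r s" by (rule Df_WB) (use Suc.prems in auto)
  have inv: "invol (r+s) (Df r k)" by (rule Df_invol) (use Suc.prems in auto)
  have sp: "Df r k (True,p) = (False,p)" "Df r k (True,q) = (False,q)"
    unfolding p_def q_def using Suc.prems by (auto simp: Df_simp)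
  note R = e_right[OF inv pq sp]
  have eq: "gr (r+s) (rres p q (Df r k)) = gr (r+s) (Df r (Suc k))"
  proof (rule gr_cong)
    fix v :: vtx assume v: "v \<in> verts (r+s)"
    obtain b m where vb: "v = (b,m)" by (cases v)
    show "rres p q (Df r k) v = Df r (Suc k) v"
      using Suc.prems unfolding vb p_def q_def by (auto simp: rres_def Df_simp)
  qed
  have "tau r s \<delta> (Suc k) = wb_mult r s \<delta> (basis (gr (r+s) (Df r k))) (basis (e_diag (r+s) p q))"
    using Suc by (simp add: ee_def p_def q_def)
  also have "\<dots> = (\<lambda>d. \<delta> ^ loops (r+s) (gr (r+s) (Df r k)) (e_diag (r+s) p q) *
       basis (comp_diag (gr (r+s) (Df r k)) (e_diag (r+s) p q)) d)"
    by (rule wb_mult_basis[OF kWB eWB])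
  also have "\<dots> = basis (gr (r+s) (Df r (Suc k)))"
    unfolding e_gr[OF pq] R eq by simp
  finally show ?case .
qed



lemma swp_simps[simp]: "swp a b a = b" "swp a b b = a" "k \<noteq> a \<Longrightarrow> k \<noteq> b \<Longrightarrow> swp a b k = k"
  by (auto simp: swp_def)

lemma Sb_swp1: "w \<noteq> (False,a) \<Longrightarrow> w \<noteq> (False,b) \<Longrightarrow> Sb (swp a b) w = w"
  by (cases w; cases "fst w") (auto simp: swp_def)
lemma Sb_swp2[simp]: "Sb (swp a b) (False,a) = (False,b)" "Sb (swp a b) (False,b) = (False,a)"
  by (auto simp: swp_def)

lemma eres_swap:
  assumes f: "invol n f" and d: "j \<noteq> p" "j \<noteq> q" "p \<noteq> q" and jn: "j \<in> {1..n}" "q \<in> {1..n}" "p \<in> {1..n}"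
    and fq: "f (False,q) = (False,p)" and v: "v \<in> verts n"
  shows "eres j q f v = Sb (swp j p) (f (Sb (swp j p) v))"
proof -
  have vj: "(False,j) \<in> verts n" "(False,q) \<in> verts n" "(False,p) \<in> verts n" using jn by auto
  have fp: "f (False,p) = (False,q)" using involD[OF f vj(2)] fq by simp
  define x where "x = f (False,j)"
  have x: "f x = (False,j)" "x \<noteq> (False,j)" using involD[OF f vj(1)] unfolding x_def by auto
  have xq: "x \<noteq> (False,q)" using x(1) fq d(1) by auto
  have xp: "x \<noteq> (False,p)" using x(1) fp d(2) by auto
  have Sx: "Sb (swp j p) x = x" by (rule Sb_swp1[OF x(2) xp])
  consider "v = (False,j)" | "v = (False,q)" | "v = x" | "v = (False,p)"
    | "v \<noteq> (False,j)" "v \<noteq> (False,q)" "v \<noteq> x" "v \<noteq> (False,p)" by blast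
  then show ?thesis
  proof cases
    case 1 then show ?thesis using d fp by (simp add: eres_def Sb_swp1)
  next
    case 2 then show ?thesis using d fq by (simp add: eres_def Sb_swp1)
  next
    case 3 then show ?thesis using d x xq Sx fq by (simp add: eres_def x_def[symmetric])
  next
    case 4 then show ?thesis using d xp Sx fq by (simp add: eres_def x_def[symmetric])
  next
    case 5
    have fv1: "f v \<noteq> (False,j)" using 5(3) involD[OF f v] unfolding x_def by auto
    have fv2: "f v \<noteq> (False,p)" using 5(2) involD[OF f v] fp by auto
    have "eres j q f v = f v" using 5 fq unfolding eres_def x_def[symmetric] by auto
    moreover have "Sb (swp j p) v = v" by (rule Sb_swp1) (use 5 in auto)
    moreover have "Sb (swp j p) (f v) = f v" by (rule Sb_swp1[OF fv1 fv2])
    ultimately show ?thesis by simp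
  qed
qed

lemma eres_sym: assumes f: "invol n f" "i \<noteq> j" "i \<in> {1..n}" "j \<in> {1..n}"
  shows "eres i j f = eres j i f"
proof -
  have "f (False,i) \<noteq> f (False,j)" using involD[OF f(1), of "(False,i)"] involD[OF f(1), of "(False,j)"] f by force
  then show ?thesis unfolding eres_def by (auto simp: fun_eq_iff)
qed

lemma swp_sym: "swp a b = swp b a" by (auto simp: swp_def fun_eq_iff)

definition cj :: "nat \<Rightarrow> nat \<Rightarrow> nat \<Rightarrow> nat \<Rightarrow> vtx \<Rightarrow> vtx" where
  "cj r t a b = (\<lambda>v. Sb (swp a b) (Df r t (Sb (swp a b) v)))"

lemma LT: assumes "t \<le> r" "t \<le> s" "a \<noteq> b" "a \<in> {1..r+s}" "b \<in> {1..r+s}" "a \<le> r \<longleftrightarrow> b \<le> r"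
  shows "wb_mult r s \<delta> (tr r s a b) (tau r s \<delta> t) = basis (gr (r+s) (cj r t a b))"
proof -
  have ps: "perm_on (r+s) (swp a b)" using assms unfolding perm_on_def swp_def by auto
  note P = perm_mult[OF Df_invol[OF assms(1,2)] ps]
  show ?thesis
    unfolding tau_basis[OF assms(1,2)] tr_def wb_mult_basis[OF tp_WB[OF assms(3-6)] Df_WB[OF assms(1,2)]]
    unfolding transp_gr[OF assms(3-5)] P cj_def by simp
qed

lemma Lid: assumes "t \<le> r" "t \<le> s"
  shows "wb_mult r s \<delta> (wb_one r s) (tau r s \<delta> t) = tau r s \<delta> t"
proof -
  have ps: "perm_on (r+s) id" unfolding perm_on_def by auto
  note P = perm_mult[OF Df_invol[OF assms(1,2)] ps]
  have e: "gr (r+s) (\<lambda>v. Sb id (Df r t (Sb id v))) = gr (r+s) (Df r t)"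
  proof (rule gr_cong)
    have Sid: "Sb id w = w" for w by (cases w; cases "fst w") auto
    fix v show "Sb id (Df r t (Sb id v)) = Df r t v" by (simp add: Sid)
  qed
  show ?thesis
    unfolding tau_basis[OF assms(1,2)] wb_one_def wb_mult_basis[OF id_WB Df_WB[OF assms(1,2)]]
    unfolding id_gr P e by simp
qed

lemma LE: assumes "t \<le> r" "t \<le> s" "a \<in> {1..r}" "b \<in> {r+1..r+s}" "Df r t (False,a) \<noteq> (False,b)"
  shows "wb_mult r s \<delta> (ee r s a b) (tau r s \<delta> t) = basis (gr (r+s) (eres a b (Df r t)))"
proof -
  have ab: "a \<noteq> b" "a \<in> {1..r+s}" "b \<in> {1..r+s}" using assms by auto
  note P = e_mult[OF Df_invol[OF assms(1,2)] ab assms(5)]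
  show ?thesis
    unfolding tau_basis[OF assms(1,2)] ee_def wb_mult_basis[OF e_WB[OF assms(3,4)] Df_WB[OF assms(1,2)]]
    unfolding e_gr[OF ab] P by simp
qed

lemma LL: assumes "t \<le> r" "t \<le> s" "a \<in> {1..r}" "b \<in> {r+1..r+s}" "Df r t (False,a) = (False,b)"
  shows "wb_mult r s \<delta> (ee r s a b) (tau r s \<delta> t) = (\<lambda>d. \<delta> * tau r s \<delta> t d)"
proof -
  have ab: "a \<noteq> b" "a \<in> {1..r+s}" "b \<in> {1..r+s}" using assms by auto
  note P = e_loop[OF Df_invol[OF assms(1,2)] ab assms(5)]
  show ?thesis
    unfolding tau_basis[OF assms(1,2)] ee_def wb_mult_basis[OF e_WB[OF assms(3,4)] Df_WB[OF assms(1,2)]]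
    unfolding e_gr[OF ab] P by simp
qed

lemma part1:
  fixes r s t a :: nat and \<delta> :: complex
  assumes t: "1 \<le> t" "t \<le> r" "t \<le> s" and a: "1 \<le> a" "a \<le> t"
  shows "wb_mult r s \<delta> (JM r s \<delta> (r - a + 1) + JM r s \<delta> (r + a)) (tau r s \<delta> t) = 0"
proof -
  define p where "p = r - a + 1"
  define q where "q = r + a"
  define \<tau> where "\<tau> = tau r s \<delta> t"
  define X where "X j = wb_mult r s \<delta> (tr r s j p) \<tau>" for j
  define Y where "Y j = wb_mult r s \<delta> (ee r s j q) \<tau>" for j
  define Z where "Z j = wb_mult r s \<delta> (tr r s j q) \<tau>" for j
  have pq: "1 \<le> p" "p \<le> r" "r < q" "q \<le> r + s" "p + q = 2*r+1" using t a unfolding p_def q_def by auto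
  have inv: "invol (r+s) (Df r t)" by (rule Df_invol) (use t in auto)
  have Dq: "Df r t (False,q) = (False,p)" using t a unfolding p_def q_def by (auto simp: Df_simp)
  have Dp: "Df r t (False,p) = (False,q)" using t a unfolding p_def q_def by (auto simp: Df_simp)
  have JMp: "JM r s \<delta> p = (\<Sum>j\<in>{1..<p}. tr r s j p)" using pq by (simp add: JM_def)
  have JMq: "JM r s \<delta> q = - (\<Sum>j\<in>{1..r}. ee r s j q) + (\<Sum>j\<in>{r+1..<q}. tr r s j q)
       + (\<lambda>d. \<delta> * wb_one r s d)" using pq by (simp add: JM_def)
  have lhs: "wb_mult r s \<delta> (JM r s \<delta> p + JM r s \<delta> q) \<tau> =
     (\<Sum>j\<in>{1..<p}. X j) + (- (\<Sum>j\<in>{1..r}. Y j) + (\<Sum>j\<in>{r+1..<q}. Z j) + (\<lambda>d. \<delta> * \<tau> d))"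
    unfolding JMp JMq wb_mult_add wb_mult_uminus wb_mult_sum wb_mult_scale X_def Y_def Z_def \<tau>_def
      Lid[OF t(2,3)] ..
  have XY: "Y j = X j" if j: "j \<in> {1..<p}" for j
  proof -
    have ne: "Df r t (False,j) \<noteq> (False,q)" using j t a pq unfolding p_def q_def by (auto simp: Df_simp)
    have "Y j = basis (gr (r+s) (eres j q (Df r t)))" unfolding Y_def \<tau>_def
      by (rule LE) (use t j pq ne in auto)
    also have "gr (r+s) (eres j q (Df r t)) = gr (r+s) (cj r t j p)"
      unfolding cj_def by (rule gr_cong, rule eres_swap[OF inv _ _ _ _ _ _ Dq]) (use j pq in auto)
    also have "basis (gr (r+s) (cj r t j p)) = X j" unfolding X_def \<tau>_def
      by (rule LT[symmetric]) (use t j pq in auto)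
    finally show ?thesis .
  qed
  have Yp: "Y p = (\<lambda>d. \<delta> * \<tau> d)" unfolding Y_def \<tau>_def by (rule LL) (use t pq Dp in auto)
  have YZ: "Y j = Z (2*r+1-j)" if j: "j \<in> {p<..r}" for j
  proof -
    define j' where "j' = 2*r+1-j"
    have j': "r < j'" "j' < q" "j \<noteq> q" using j pq unfolding j'_def by auto
    have Dj: "Df r t (False,j) = (False,j')" using j t a unfolding p_def j'_def by (auto simp: Df_simp)
    have ne: "Df r t (False,j) \<noteq> (False,q)" using Dj j' by auto
    have "Y j = basis (gr (r+s) (eres j q (Df r t)))" unfolding Y_def \<tau>_def
      by (rule LE) (use t j pq ne in auto)
    also have "eres j q (Df r t) = eres q j (Df r t)" by (rule eres_sym[OF inv]) (use j pq in auto)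
    also have "gr (r+s) (eres q j (Df r t)) = gr (r+s) (cj r t q j')"
      unfolding cj_def by (rule gr_cong, rule eres_swap[OF inv _ _ _ _ _ _ Dj]) (use j pq j' in auto)
    also have "cj r t q j' = cj r t j' q" unfolding cj_def swp_sym[of q j'] ..
    also have "basis (gr (r+s) (cj r t j' q)) = Z j'" unfolding Z_def \<tau>_def
      by (rule LT[symmetric]) (use t j' pq in auto)
    finally show ?thesis unfolding j'_def .
  qed
  have split: "{1..r} = {1..<p} \<union> insert p {p<..r}" using pq by auto
  have SY: "(\<Sum>j\<in>{1..r}. Y j) = (\<Sum>j\<in>{1..<p}. X j) + ((\<lambda>d. \<delta> * \<tau> d) + (\<Sum>j\<in>{r+1..<q}. Z j))"
  proof -
    have "(\<Sum>j\<in>{1..r}. Y j) = (\<Sum>j\<in>{1..<p}. Y j) + (\<Sum>j\<in>insert p {p<..r}. Y j)"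
      unfolding split by (rule sum.union_disjoint) auto
    also have "(\<Sum>j\<in>insert p {p<..r}. Y j) = Y p + (\<Sum>j\<in>{p<..r}. Y j)" by (rule sum.insert) auto
    also have "(\<Sum>j\<in>{1..<p}. Y j) = (\<Sum>j\<in>{1..<p}. X j)" by (rule sum.cong[OF refl XY])
    also have "(\<Sum>j\<in>{p<..r}. Y j) = (\<Sum>j\<in>{p<..r}. Z (2*r+1-j))" by (rule sum.cong[OF refl YZ])
    also have "\<dots> = (\<Sum>j\<in>{r+1..<q}. Z j)"
      by (rule sum.reindex_bij_witness[of _ "\<lambda>x. 2*r+1-x" "\<lambda>x. 2*r+1-x"]) (use pq in auto)
    finally show ?thesis unfolding Yp .
  qed
  have "wb_mult r s \<delta> (JM r s \<delta> p + JM r s \<delta> q) \<tau> = 0"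
    unfolding lhs SY by (simp add: algebra_simps)
  then show ?thesis unfolding p_def q_def \<tau>_def .
qed

lemma part2:
  fixes r s t j :: nat and \<delta> :: complex
  assumes t: "1 \<le> t" "t \<le> r" "t \<le> s" and j: "j \<in> {r+t+1..r+s}"
  shows "wb_mult r s \<delta> (- (\<Sum>i\<in>{r-t+1..r}. ee r s i j) + (\<Sum>i\<in>{r+1..r+t}. tr r s i j))
              (tau r s \<delta> t) = 0"
proof -
  define \<tau> where "\<tau> = tau r s \<delta> t"
  define Y where "Y i = wb_mult r s \<delta> (ee r s i j) \<tau>" for i
  define Z where "Z i = wb_mult r s \<delta> (tr r s i j) \<tau>" for i
  have inv: "invol (r+s) (Df r t)" by (rule Df_invol) (use t in auto)
  have lhs: "wb_mult r s \<delta> (- (\<Sum>i\<in>{r-t+1..r}. ee r s i j) + (\<Sum>i\<in>{r+1..r+t}. tr r s i j)) \<tau>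
     = - (\<Sum>i\<in>{r-t+1..r}. Y i) + (\<Sum>i\<in>{r+1..r+t}. Z i)"
    unfolding wb_mult_add wb_mult_uminus wb_mult_sum Y_def Z_def ..
  have YZ: "Y i = Z (2*r+1-i)" if i: "i \<in> {r-t+1..r}" for i
  proof -
    define i' where "i' = 2*r+1-i"
    have i': "r < i'" "i' \<le> r + t" using i t unfolding i'_def by auto
    have Di: "Df r t (False,i) = (False,i')" using i t unfolding i'_def by (auto simp: Df_simp)
    have ne: "Df r t (False,i) \<noteq> (False,j)" using Di i' j by auto
    have "Y i = basis (gr (r+s) (eres i j (Df r t)))" unfolding Y_def \<tau>_def
      by (rule LE) (use t i j ne in auto)
    also have "eres i j (Df r t) = eres j i (Df r t)" by (rule eres_sym[OF inv]) (use i j t in auto)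
    also have "gr (r+s) (eres j i (Df r t)) = gr (r+s) (cj r t j i')"
      unfolding cj_def by (rule gr_cong, rule eres_swap[OF inv _ _ _ _ _ _ Di]) (use i j i' t in auto)
    also have "cj r t j i' = cj r t i' j" unfolding cj_def swp_sym[of j i'] ..
    also have "basis (gr (r+s) (cj r t i' j)) = Z i'" unfolding Z_def \<tau>_def
      by (rule LT[symmetric]) (use t i' j in auto)
    finally show ?thesis unfolding i'_def .
  qed
  have "(\<Sum>i\<in>{r-t+1..r}. Y i) = (\<Sum>i\<in>{r-t+1..r}. Z (2*r+1-i))" by (rule sum.cong[OF refl YZ])
  also have "\<dots> = (\<Sum>i\<in>{r+1..r+t}. Z i)"
    by (rule sum.reindex_bij_witness[of _ "\<lambda>x. 2*r+1-x" "\<lambda>x. 2*r+1-x"]) (use t in auto)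
  finally have "wb_mult r s \<delta> (- (\<Sum>i\<in>{r-t+1..r}. ee r s i j) + (\<Sum>i\<in>{r+1..r+t}. tr r s i j)) \<tau> = 0"
    unfolding lhs by simp
  then show ?thesis unfolding \<tau>_def .
qed

theorem mainTheorem7:
  fixes r s t :: nat and \<delta> :: complex
  assumes "1 \<le> t" and "t \<le> min r s"
  shows "(\<forall>a\<in>{1..t}. wb_mult r s \<delta> (JM r s \<delta> (r - a + 1) + JM r s \<delta> (r + a)) (tau r s \<delta> t) = 0)
       \<and> (\<forall>j\<in>{r+t+1..r+s}.
            wb_mult r s \<delta> (- (\<Sum>i\<in>{r-t+1..r}. ee r s i j) + (\<Sum>i\<in>{r+1..r+t}. tr r s i j))
              (tau r s \<delta> t) = 0)"
  using part1[of t r s] part2[of t r s] assms by auto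


end
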